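(* In the MLR-DMPC setting described in the context, let $w\neq v$ be two CUs, $i\in\mathcal A$ a UAV and $k$ a round. If after executing the information-tracker update procedure of round $k$ the trackers $\mathcal D_{iw}(k)$ and $\mathcal D_{iv}(k)$ are both not deprecated, then $\mathcal D_{iw}(k)=\mathcal D_{iv}(k)$.
   Context: Setting (MLR-DMPC). There are $N$ UAVs indexed by $\mathcal A=\{1,\dots,N\}$ and $M$ compute units (CUs) indexed by $w\in\{1,\dots,M\}$, $1<M<N$. Time is divided into rounds $k=0,1,2,\dots$ of length $T>0$; each round consists of a computation phase followed by a communication phase in which every device broadcasts at most one message; any message may be lost at any receiver (arbitrary message loss). Nominal model: each UAV $i$ has a nominal system $\dot{\hat x}_i=\hat f_i(\hat x_i,\hat u_i)$, $\hat x_i\in\hat{\mathcal X}$, $\hat u_i\in\hat{\mathcal U}$, with nominal position $\hat p_i=\hat g_{p,i}(\hat x_i)\in\mathbb R^3$. Reference trajectories: in round $k$ UAV $i$ follows a reference $\hat x_i(\tau|k),\hat u_i(\tau|k)$, $\tau\ge 0$, applied at time $t=kT+\tau$. If in the communication phase of round $k$ UAV $i$ receives a trajectory $\hat u_{i,w}(\cdot|k)$ computed by CU $w$, then $\hat u_i(\tau|k+1)=\hat u_{i,w}(\tau+T|k)$; otherwise $\hat u_i(\tau|k+1)=\hat u_i(\tau+T|k)$. Each UAV broadcasts a message containing the metadata (computing CU and round) of the trajectory it currently follows. Information trackers: each CU $w$ keeps, for each UAV $i$, a set $\mathcal D_{iw}(k)$ of candidate trajectories (with metadata) together with a flag up-to-date/deprecated;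 elements are written $\tilde x_i(\cdot|k-1)$, $\tilde p_i(\cdot|k-1)$. Initially all trackers are empty and deprecated. At the start of round $k$, CU $w$ updates using the messages received in round $k-1$: (1) start from $\mathcal D_{iw}(k-1)$; for every UAV $i$ whose message was received, replace its tracker by the single stored trajectory whose metadata matches and mark that tracker up-to-date; (2) if some tracker then has more than one element, mark all trackers deprecated; (3) if fewer than $M$ CU messages were received, mark all trackers deprecated; (4) for every received CU message containing a newly computed trajectory for a UAV $i$, add it to $\mathcal D_{iw}(k)$. If all trackers are up-to-date, the CU runs a DMPC step: all such CUs compute the same set $\mathcal A_{ET}(k)$ of $M$ UAVs (highest priorities after max-consensus), CU $w$ selects the UAV at position $(k+w)\bmod M$ of $\mathcal A_{ET}(k)$ and, if that UAV's tracker has exactly one element, computes and broadcasts a new trajectory for it. Otherwise the CU is in message-loss-recovery mode: it computes no trajectory and instead (in alternate rounds) requests a UAV with a deprecated tracker to rebroadcast its current reference trajectory with metadata. *)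

theory Defs
  imports Main
begin

text \<open>
  UAVs are 1..N, CUs are 1..M.  A (reference) trajectory is represented by the
  trajectory as originally computed (type 'tr, abstract) together with its
  metadata: Some (w, k) = computed by CU w in round k, None = the initial
  reference of the UAV.  The time shift by T per round is applied identically
  to every stored/followed trajectory, so it is left implicit.
\<close>

type_synonym meta = "(nat \<times> nat) option"
type_synonym 'tr cand = "'tr \<times> meta"

text \<open>Parameters of a run: sizes, initial references, the outputs of the
  optimisation problems (sol k w = trajectory CU w would compute in round k),
  the common sets A_ET(k) (as lists, position p = index p), the recovery
  requests chosen by CUs, and arbitrary message reception (message loss).\<close>
record 'tr mlr_sys =
  nU :: nat
  nC :: nat
  init_ref :: "nat \<Rightarrow> 'tr"
  sol :: "nat \<Rightarrow> nat \<Rightarrow> 'tr"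
  aet :: "nat \<Rightarrow> nat list"
  req :: "nat \<Rightarrow> nat \<Rightarrow> nat option"
  rcv_uav :: "nat \<Rightarrow> nat \<Rightarrow> nat \<Rightarrow> bool"     \<comment> \<open>k i w: in round k CU w receives the message of UAV i\<close>
  rcv_cu :: "nat \<Rightarrow> nat \<Rightarrow> nat \<Rightarrow> bool"      \<comment> \<open>k v w: in round k CU w receives the message of CU v\<close>
  rcv_cu_uav :: "nat \<Rightarrow> nat \<Rightarrow> nat \<Rightarrow> bool"  \<comment> \<open>k w i: in round k UAV i receives the message of CU w\<close>

record 'tr mlr_state =
  ref :: "nat \<Rightarrow> 'tr cand"
  trk :: "nat \<Rightarrow> nat \<Rightarrow> 'tr cand set"
  upd :: "nat \<Rightarrow> nat \<Rightarrow> bool"          \<comment> \<open>upd i w: D_iw is up-to-date (else deprecated)\<close>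
  rebc :: "nat \<Rightarrow> bool"                 \<comment> \<open>UAV i rebroadcasts its reference this round (was requested)\<close>

definition UAVs :: "'tr mlr_sys \<Rightarrow> nat set" where
  "UAVs S = {1..nU S}"

definition CUs :: "'tr mlr_sys \<Rightarrow> nat set" where
  "CUs S = {1..nC S}"

definition valid_sys :: "'tr mlr_sys \<Rightarrow> bool" where
  "valid_sys S \<longleftrightarrow> 1 < nC S \<and> nC S < nU S \<and>
     (\<forall>k. distinct (aet S k) \<and> length (aet S k) = nC S \<and> set (aet S k) \<subseteq> UAVs S)"

definition dmpc_mode :: "'tr mlr_sys \<Rightarrow> ('tr, 'b) mlr_state_scheme \<Rightarrow> nat \<Rightarrow> bool" where
  "dmpc_mode S st w \<longleftrightarrow> (\<forall>i\<in>UAVs S. upd st i w)"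

definition computed :: "'tr mlr_sys \<Rightarrow> nat \<Rightarrow> 'tr mlr_state \<Rightarrow> nat \<Rightarrow> (nat \<times> 'tr) option" where
  "computed S k st w =
     (if dmpc_mode S st w then
        (let i = aet S k ! ((k + w) mod nC S) in
           if card (trk st i w) = 1 then Some (i, sol S k w) else None)
      else None)"

definition request :: "'tr mlr_sys \<Rightarrow> nat \<Rightarrow> 'tr mlr_state \<Rightarrow> nat \<Rightarrow> nat option" where
  "request S k st w =
     (if dmpc_mode S st w then None
      else (case req S k w of
              Some j \<Rightarrow> if j \<in> UAVs S \<and> \<not> upd st j w then Some j else None
            | None \<Rightarrow> None))"

definition step :: "'tr mlr_sys \<Rightarrow> nat \<Rightarrow> 'tr mlr_state \<Rightarrow> 'tr mlr_state" where
  "step S k st =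
    (let comp = computed S k st;
         reqs = request S k st;
         got = (\<lambda>i w. w \<in> CUs S \<and> rcv_cu_uav S k w i \<and> (\<exists>x. comp w = Some (i, x)));
         new_ref = (\<lambda>i. if (\<exists>w. got i w)
                         then (let w = (LEAST w. got i w) in (sol S k w, Some (w, k)))
                         else ref st i);
         new_rebc = (\<lambda>i. \<exists>w\<in>CUs S. rcv_cu_uav S k w i \<and> reqs w = Some i);
         \<comment> \<open>(1) received UAV messages\<close>
         D1 = (\<lambda>i w. if rcv_uav S k i w
                      then (if rebc st i then {ref st i}
                            else {d \<in> trk st i w. snd d = snd (ref st i)})
                      else trk st i w);
         U1 = (\<lambda>i w. if rcv_uav S k i w then D1 i w \<noteq> {} else upd st i w);
         \<comment> \<open>(2) some tracker with more than one element\<close>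
         dep2 = (\<lambda>w. \<exists>i\<in>UAVs S. card (D1 i w) > 1);
         \<comment> \<open>(3) fewer than M CU messages received\<close>
         dep3 = (\<lambda>w. card {v \<in> CUs S. rcv_cu S k v w} < nC S);
         \<comment> \<open>(4) add received newly computed trajectories\<close>
         D = (\<lambda>i w. D1 i w \<union> {(x, Some (v, k)) | v x. v \<in> CUs S \<and> rcv_cu S k v w \<and> comp v = Some (i, x)})
     in \<lparr>ref = new_ref, trk = D, upd = (\<lambda>i w. U1 i w \<and> \<not> dep2 w \<and> \<not> dep3 w), rebc = new_rebc\<rparr>)"

text \<open>State in round k, after the tracker update at the start of round k.\<close>
primrec run :: "'tr mlr_sys \<Rightarrow> nat \<Rightarrow> 'tr mlr_state" where
  "run S 0 = \<lparr>ref = (\<lambda>i. (init_ref S i, None)), trk = (\<lambda>i w. {}), upd = (\<lambda>i w. False), rebc = (\<lambda>i. False)\<rparr>"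
| "run S (Suc k) = step S k (run S k)"

end

theory Submission
  imports Defs
begin

definition cns :: "'tr mlr_sys \<Rightarrow> nat \<Rightarrow> 'tr cand \<Rightarrow> bool" where
  "cns S i d \<longleftrightarrow> fst d = (case snd d of None \<Rightarrow> init_ref S i | Some (v, k) \<Rightarrow> sol S k v)"

definition d1 :: "'tr mlr_sys \<Rightarrow> nat \<Rightarrow> 'tr mlr_state \<Rightarrow> nat \<Rightarrow> nat \<Rightarrow> 'tr cand set" where
  "d1 S k st i w = (if rcv_uav S k i w
                      then (if rebc st i then {ref st i}
                            else {d \<in> trk st i w. snd d = snd (ref st i)})
                      else trk st i w)"

definition added :: "'tr mlr_sys \<Rightarrow> nat \<Rightarrow> 'tr mlr_state \<Rightarrow> nat \<Rightarrow> 'tr cand set" where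
  "added S k st i = {(x, Some (v, k)) | v x. v \<in> CUs S \<and> computed S k st v = Some (i, x)}"

lemma trk_step: "trk (step S k st) i w = d1 S k st i w \<union>
   {(x, Some (v, k)) | v x. v \<in> CUs S \<and> rcv_cu S k v w \<and> computed S k st v = Some (i, x)}"
  by (simp add: step_def Let_def d1_def)

lemma upd_step: "upd (step S k st) i w = ((if rcv_uav S k i w then d1 S k st i w \<noteq> {} else upd st i w)
   \<and> \<not> (\<exists>j\<in>UAVs S. card (d1 S k st j w) > 1) \<and> \<not> card {v \<in> CUs S. rcv_cu S k v w} < nC S)"
  by (simp add: step_def Let_def d1_def)

lemma rebc_step: "rebc (step S k st) i = (\<exists>w\<in>CUs S. rcv_cu_uav S k w i \<and> request S k st w = Some i)"
  by (simp add: step_def Let_def)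

lemma computed_sol: "computed S k st v = Some (i, x) \<Longrightarrow> x = sol S k v"
  by (simp add: computed_def Let_def split: if_splits)

lemma ref_step_eq: "ref (step S k st) i =
  (if (\<exists>w. w \<in> CUs S \<and> rcv_cu_uav S k w i \<and> (\<exists>x. computed S k st w = Some (i, x)))
   then (let w = (LEAST w. w \<in> CUs S \<and> rcv_cu_uav S k w i \<and> (\<exists>x. computed S k st w = Some (i, x)))
         in (sol S k w, Some (w, k)))
   else ref st i)"
  unfolding step_def Let_def by (simp only: mlr_state.simps)

lemma ref_step: "ref (step S k st) i = ref st i \<or>
  (\<exists>v\<in>CUs S. \<exists>x. computed S k st v = Some (i, x) \<and> ref (step S k st) i = (x, Some (v, k)))"
proof -
  let ?got = "\<lambda>w. w \<in> CUs S \<and> rcv_cu_uav S k w i \<and> (\<exists>x. computed S k st w = Some (i, x))"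
  show ?thesis
  proof (cases "\<exists>w. ?got w")
    case True
    hence g: "?got (LEAST w. ?got w)" by (rule LeastI_ex)
    then obtain x where x: "computed S k st (LEAST w. ?got w) = Some (i, x)" by blast
    have "ref (step S k st) i = (sol S k (LEAST w. ?got w), Some (LEAST w. ?got w, k))"
      using True unfolding ref_step_eq Let_def by (simp only: if_True)
    moreover have "x = sol S k (LEAST w. ?got w)" using computed_sol[OF x] .
    ultimately have "ref (step S k st) i = (x, Some (LEAST w. ?got w, k))" by simp
    then show ?thesis using g x by blast
  next
    case False
    have "ref (step S k st) i = ref st i" using False unfolding ref_step_eq by (simp only: if_False)
    then show ?thesis by blast
  qed
qed

lemma cons_inv: "cns S i (ref (run S k) i) \<and> (\<forall>w. \<forall>d\<in>trk (run S k) i w. cns S i d)"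
proof (induction k)
  case 0
  then show ?case by (simp add: cns_def)
next
  case (Suc k)
  let ?st = "run S k"
  have r: "cns S i (ref (step S k ?st) i)"
    using ref_step[of S k ?st i] Suc computed_sol by (auto simp: cns_def)
  have "\<forall>w. \<forall>d\<in>trk (step S k ?st) i w. cns S i d"
    using Suc computed_sol unfolding trk_step d1_def by (auto simp: cns_def)
  then show ?case using r by simp
qed

lemma finite_added: "finite (added S k st i)"
proof -
  have "added S k st i \<subseteq> (\<lambda>v. (sol S k v, Some (v, k))) ` CUs S"
    unfolding added_def using computed_sol by fastforce
  moreover have "finite (CUs S)" by (simp add: CUs_def)
  ultimately show ?thesis by (meson finite_imageI finite_subset)
qed

lemma step_lemma:
  assumes iU: "i \<in> UAVs S" and u: "upd (step S k st) i w"
    and cr: "cns S i (ref st i)" and ct: "\<forall>d\<in>trk st i w. cns S i d"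
    and H: "upd st i w \<Longrightarrow> finite (trk st i w) \<and> ref st i \<in> trk st i w"
  shows "trk (step S k st) i w = {ref st i} \<union> added S k st i"
proof -
  have U: "(if rcv_uav S k i w then d1 S k st i w \<noteq> {} else upd st i w)
   \<and> \<not> (\<exists>j\<in>UAVs S. card (d1 S k st j w) > 1) \<and> \<not> card {v \<in> CUs S. rcv_cu S k v w} < nC S"
    using u unfolding upd_step .
  have u1: "if rcv_uav S k i w then d1 S k st i w \<noteq> {} else upd st i w" using U by (rule conjunct1)
  have u2: "\<not> card (d1 S k st i w) > 1" using U iU by blast
  have u3: "\<not> card {v \<in> CUs S. rcv_cu S k v w} < nC S" using U by blast
  have fC: "finite (CUs S)" and cC: "card (CUs S) = nC S" by (simp_all add: CUs_def)
  have "{v \<in> CUs S. rcv_cu S k v w} = CUs S"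
    by (rule card_seteq[OF fC]) (use u3 cC in auto)
  hence allr: "\<forall>v\<in>CUs S. rcv_cu S k v w" by blast
  have D1: "d1 S k st i w = {ref st i}"
  proof (cases "rcv_uav S k i w")
    case True
    show ?thesis
    proof (cases "rebc st i")
      case True thus ?thesis using \<open>rcv_uav S k i w\<close> by (simp add: d1_def)
    next
      case False
      have sub: "d1 S k st i w \<subseteq> {ref st i}"
      proof
        fix d assume "d \<in> d1 S k st i w"
        hence "d \<in> trk st i w" "snd d = snd (ref st i)" using False \<open>rcv_uav S k i w\<close> by (auto simp: d1_def)
        hence "fst d = fst (ref st i)" using ct cr by (simp add: cns_def)
        thus "d \<in> {ref st i}" using \<open>snd d = _\<close> by (simp add: prod_eq_iff)
      qed
      thus ?thesis using u1 True by (simp add: subset_singleton_iff)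
    qed
  next
    case False
    hence e: "d1 S k st i w = trk st i w" and "upd st i w" using u1 by (auto simp: d1_def)
    have f: "finite (trk st i w)" using H[OF \<open>upd st i w\<close>] by (rule conjunct1)
    have r: "ref st i \<in> trk st i w" using H[OF \<open>upd st i w\<close>] by (rule conjunct2)
    have c: "card (trk st i w) \<le> Suc 0" using u2 unfolding e by linarith
    have all: "\<forall>a\<in>trk st i w. \<forall>b\<in>trk st i w. a = b" using card_le_Suc0_iff_eq[OF f] c by blast
    have "trk st i w = {ref st i}" using all r by blast
    with e show ?thesis by (rule trans)
  qed
  show ?thesis unfolding trk_step D1 added_def using allr by auto
qed

lemma main_inv:
  "i \<in> UAVs S \<Longrightarrow> upd (run S (Suc k)) i w \<Longrightarrow>
   trk (run S (Suc k)) i w = {ref (run S k) i} \<union> added S k (run S k) i"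
proof (induction k arbitrary: w)
  case (0 w)
  show ?case using 0 cons_inv[of S i 0]
    by (simp only: run.simps(2)) (rule step_lemma, auto)
next
  case (Suc k w)
  let ?st = "run S (Suc k)"
  have H: "finite (trk ?st i w) \<and> ref ?st i \<in> trk ?st i w" if "upd ?st i w"
  proof -
    have eq: "trk ?st i w = {ref (run S k) i} \<union> added S k (run S k) i" using Suc.IH Suc.prems(1) that by blast
    have "ref ?st i \<in> {ref (run S k) i} \<union> added S k (run S k) i"
      using ref_step[of S k "run S k" i] unfolding added_def by auto
    thus ?thesis using eq finite_added by simp
  qed
  show ?case using Suc.prems cons_inv[of S i "Suc k"] H
    by (simp only: run.simps(2)[of S "Suc k"]) (rule step_lemma, auto)
qed

theorem lemma2:
  fixes S :: "'tr mlr_sys" and w v i k :: nat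
  assumes "valid_sys S"
    and "w \<in> CUs S" and "v \<in> CUs S" and "w \<noteq> v"
    and "i \<in> UAVs S"
    and "upd (run S k) i w" and "upd (run S k) i v"
  shows "trk (run S k) i w = trk (run S k) i v"
proof (cases k)
  case 0
  then show ?thesis using assms by simp
next
  case (Suc k')
  then show ?thesis using assms main_inv by metis
qed

end
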